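(* For every $\alpha\in(0,1)$ and $\theta\in\mathbb R$, the elementary expectile scoring function $\mathrm S^{\rm E}_{\alpha,\theta}$ belongs to $\mathcal S^{\rm E}_{\alpha,1}$ and is an extreme point of $\mathcal S^{\rm E}_{\alpha,1}$: if $\mathrm S^{\rm E}_{\alpha,\theta}=(\mathrm S_1+\mathrm S_2)/2$ pointwise on $\mathbb R^2$ with $\mathrm S_1,\mathrm S_2\in\mathcal S^{\rm E}_{\alpha,1}$, then $\mathrm S_1=\mathrm S_2=\mathrm S^{\rm E}_{\alpha,\theta}$.
   Context: $\mathbb 1(A)$ denotes the indicator of $A$ and $(t)_+=\max(t,0)$. $\mathcal I$ is the class of left-continuous non-decreasing functions $\mathbb R\to\mathbb R$, and $\mathcal I_1=\{g\in\mathcal I:\lim_{x\to-\infty}g(x)=0,\ \lim_{x\to+\infty}g(x)=1\}$. For a convex $\phi:\mathbb R\to\mathbb R$, $\phi'$ denotes its left-hand derivative. $\mathcal C_1$ is the class of convex $\phi:\mathbb R\to\mathbb R$ with $\phi(0)=0$ and $\phi'\in\mathcal I_1$. For $\alpha\in(0,1)$, $\mathcal S^{\rm E}_{\alpha,1}$ is the (convex) class of all functions of the form $\mathrm S(x,y)=|\mathbb 1(y<x)-\alpha|\,(\phi(y)-\phi(x)-\phi'(x)(y-x))$ with $\phi\in\mathcal C_1$. The elementary expectile scoring function is $\mathrm S^{\rm E}_{\alpha,\theta}(x,y)=|\mathbb 1(y<x)-\alpha|\big((y-\theta)_+-(x-\theta)_+-(y-x)\mathbb 1(\theta<x)\big)$,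 i.e. it equals $(1-\alpha)|y-\theta|$ if $y\le\theta<x$, $\alpha|y-\theta|$ if $x\le\theta<y$, and $0$ otherwise. *)

theory Defs
  imports "HOL-Analysis.Analysis"
begin

text \<open>Left-hand derivative of a real function (for convex functions this limit exists).\<close>
definition left_deriv :: "(real \<Rightarrow> real) \<Rightarrow> real \<Rightarrow> real" where
  "left_deriv \<phi> x = Lim (at_left x) (\<lambda>y. (\<phi> y - \<phi> x) / (y - x))"

definition class_I :: "(real \<Rightarrow> real) set" where
  "class_I = {g. mono g \<and> (\<forall>x. continuous (at_left x) g)}"

definition class_I1 :: "(real \<Rightarrow> real) set" where
  "class_I1 = {g \<in> class_I. (g \<longlongrightarrow> 0) at_bot \<and> (g \<longlongrightarrow> 1) at_top}"

definition class_C1 :: "(real \<Rightarrow> real) set" where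
  "class_C1 = {\<phi>. convex_on UNIV \<phi> \<and> \<phi> 0 = 0 \<and> left_deriv \<phi> \<in> class_I1}"

definition ind :: "bool \<Rightarrow> real" where
  "ind P = (if P then 1 else 0)"

definition S_E :: "real \<Rightarrow> (real \<Rightarrow> real) \<Rightarrow> real \<Rightarrow> real \<Rightarrow> real" where
  "S_E \<alpha> \<phi> x y = \<bar>ind (y < x) - \<alpha>\<bar> * (\<phi> y - \<phi> x - left_deriv \<phi> x * (y - x))"

definition class_SE1 :: "real \<Rightarrow> (real \<Rightarrow> real \<Rightarrow> real) set" where
  "class_SE1 \<alpha> = {S. \<exists>\<phi>\<in>class_C1. S = S_E \<alpha> \<phi>}"

definition S_elem :: "real \<Rightarrow> real \<Rightarrow> real \<Rightarrow> real \<Rightarrow> real" where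
  "S_elem \<alpha> \<theta> x y = \<bar>ind (y < x) - \<alpha>\<bar> *
     (max (y - \<theta>) 0 - max (x - \<theta>) 0 - (y - x) * ind (\<theta> < x))"

end

theory Submission imports Defs begin


lemma slope_mono:
  fixes f :: "real \<Rightarrow> real"
  assumes "convex_on UNIV f" "a \<le> b" "b < x"
  shows "(f a - f x)/(a - x) \<le> (f b - f x)/(b - x)"
proof (cases "a = b")
  case False
  then show ?thesis using convex_on_slope_le(2)[OF assms(1), of a x b] assms by auto
qed simp

lemma slope_lr:
  fixes f :: "real \<Rightarrow> real"
  assumes "convex_on UNIV f" "b < x" "x < y"
  shows "(f b - f x)/(b - x) \<le> (f y - f x)/(y - x)"
proof -
  have 1: "(f b - f x) / (b - x) \<le> (f b - f y) / (b - y)"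
    using convex_on_slope_le(1)[OF assms(1), of b y x] assms by auto
  have 2: "(f b - f y) / (b - y) \<le> (f x - f y) / (x - y)"
    using convex_on_slope_le(2)[OF assms(1), of b y x] assms by auto
  have "(f x - f y) / (x - y) = (f y - f x)/(y - x)"
    by (simp add: divide_simps) (auto simp: algebra_simps)
  with 1 2 show ?thesis by linarith
qed

lemma left_deriv_Sup:
  fixes f :: "real \<Rightarrow> real"
  assumes cv: "convex_on UNIV f"
  shows "left_deriv f x = Sup ((\<lambda>y. (f y - f x)/(y - x)) ` {..<x})"
proof -
  have "((\<lambda>y. (f y - f x)/(y - x)) \<longlongrightarrow> Sup ((\<lambda>y. (f y - f x)/(y - x)) ` ({..<x} \<inter> UNIV))) (at x within ({..<x} \<inter> UNIV))"
    apply (rule Lim_left_bound[where K = "(f (x+1) - f x)/((x+1) - x)"])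
     apply (simp add: slope_mono[OF cv])
    using slope_lr[OF cv, of _ x "x+1"] by simp
  then have "((\<lambda>y. (f y - f x)/(y - x)) \<longlongrightarrow> Sup ((\<lambda>y. (f y - f x)/(y - x)) ` {..<x})) (at_left x)"
    by simp
  then show ?thesis unfolding left_deriv_def
    by (intro tendsto_Lim) (auto simp: trivial_limit_at_left_real)
qed

lemma subgrad:
  fixes f :: "real \<Rightarrow> real"
  assumes cv: "convex_on UNIV f"
  shows "f x + left_deriv f x * (y - x) \<le> f y"
proof -
  define s where "s = (\<lambda>y. (f y - f x)/(y - x))"
  have ld: "left_deriv f x = Sup (s ` {..<x})" using left_deriv_Sup[OF cv] s_def by simp
  have bdd: "bdd_above (s ` {..<x})"
    using slope_lr[OF cv, of _ x "x+1"] unfolding s_def by (intro bdd_aboveI2[where M="s (x+1)"]) (auto simp: s_def)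
  consider "y < x" | "y = x" | "y > x" by linarith
  then show ?thesis
  proof cases
    case 1
    have "s y \<le> left_deriv f x" unfolding ld using 1 bdd by (intro cSup_upper) auto
    then have "(f y - f x)/(y - x) \<le> left_deriv f x" by (simp add: s_def)
    then have "left_deriv f x * (y - x) \<le> f y - f x" using 1
      by (simp add: divide_le_eq mult.commute)
    then show ?thesis by simp
  next
    case 3
    have "left_deriv f x \<le> s y" unfolding ld
      apply (rule cSup_least) using slope_lr[OF cv _ 3] by (auto simp: s_def)
    then have "left_deriv f x \<le> (f y - f x)/(y - x)" by (simp add: s_def)
    then have "left_deriv f x * (y - x) \<le> f y - f x" using 3
      by (simp add: le_divide_eq)
    then show ?thesis by simp
  qed simp
qed


definition ee :: "real \<Rightarrow> real \<Rightarrow> real" where "ee \<theta> y = max (y - \<theta>) 0"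

lemma ld_elem: "left_deriv (\<lambda>y. ee \<theta> y - ee \<theta> 0) x = ind (\<theta> < x)"
proof -
  have "((\<lambda>y. ((ee \<theta> y - ee \<theta> 0) - (ee \<theta> x - ee \<theta> 0))/(y - x)) \<longlongrightarrow> ind (\<theta> < x)) (at_left x)"
  proof (cases "x \<le> \<theta>")
    case True
    note T = this
    show ?thesis
      apply (rule tendsto_eventually)
      apply (rule eventually_mono[OF eventually_at_left_real[of "x - 1" x]])
      using T by (auto simp: ee_def ind_def)
  next
    case False
    show ?thesis
      apply (rule tendsto_eventually)
      apply (rule eventually_mono[OF eventually_at_left_real[of \<theta> x]])
      using False by (auto simp: ee_def ind_def)
  qed
  then show ?thesis unfolding left_deriv_def
    by (intro tendsto_Lim) (auto simp: trivial_limit_at_left_real)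
qed

lemma ind_I1: "(\<lambda>x. ind (\<theta> < x)) \<in> class_I1"
proof -
  have mono: "mono (\<lambda>x. ind (\<theta> < x))" by (auto simp: mono_def ind_def)
  have cont: "continuous (at_left x) (\<lambda>x. ind (\<theta> < x))" for x
  proof (cases "x \<le> \<theta>")
    case True
    note T = this
    show ?thesis unfolding continuous_within
      apply (rule tendsto_eventually)
      apply (rule eventually_mono[OF eventually_at_left_real[of "x - 1" x]])
      using T by (auto simp: ind_def)
  next
    case False
    show ?thesis unfolding continuous_within
      apply (rule tendsto_eventually)
      apply (rule eventually_mono[OF eventually_at_left_real[of \<theta> x]])
      using False by (auto simp: ind_def)
  qed
  have bot: "((\<lambda>x. ind (\<theta> < x)) \<longlongrightarrow> 0) at_bot"
    apply (rule tendsto_eventually)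
    unfolding eventually_at_bot_linorder by (rule exI[of _ \<theta>]) (auto simp: ind_def)
  have top: "((\<lambda>x. ind (\<theta> < x)) \<longlongrightarrow> 1) at_top"
    apply (rule tendsto_eventually)
    unfolding eventually_at_top_linorder by (rule exI[of _ "\<theta>+1"]) (auto simp: ind_def)
  show ?thesis using mono cont bot top by (auto simp: class_I1_def class_I_def)
qed

lemma elem_in: "S_elem \<alpha> \<theta> \<in> class_SE1 \<alpha>"
proof -
  let ?p = "\<lambda>y. ee \<theta> y - ee \<theta> 0"
  have cv: "convex_on UNIV ?p"
    apply (rule pos_convex_function[where f' = "\<lambda>x. ind (\<theta> < x)"])
    by (auto simp: ee_def ind_def)
  have ld: "left_deriv ?p = (\<lambda>x. ind (\<theta> < x))" using ld_elem by auto
  have C: "?p \<in> class_C1" using cv ld ind_I1 by (simp add: class_C1_def)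
  have "S_elem \<alpha> \<theta> = S_E \<alpha> ?p"
    unfolding fun_eq_iff S_elem_def S_E_def ld by (auto simp: ee_def algebra_simps)
  then show ?thesis using C by (auto simp: class_SE1_def)
qed

lemma rigid:
  fixes \<phi> :: "real \<Rightarrow> real"
  assumes C: "\<phi> \<in> class_C1"
    and bd: "\<And>x y. \<phi> y - \<phi> x - left_deriv \<phi> x * (y - x) \<le> 2 * (ee \<theta> y - ee \<theta> x - (y - x) * ind (\<theta> < x))"
  shows "S_E \<alpha> \<phi> = S_elem \<alpha> \<theta>"
proof -
  define L where "L = left_deriv \<phi>"
  have cv: "convex_on UNIV \<phi>" and LI: "L \<in> class_I1" using C by (auto simp: class_C1_def L_def)
  have L0: "(L \<longlongrightarrow> 0) at_bot" and L1: "(L \<longlongrightarrow> 1) at_top" using LI by (auto simp: class_I1_def)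
  have sg: "\<phi> x + L x * (y - x) \<le> \<phi> y" for x y using subgrad[OF cv] by (simp add: L_def)
  have A: "\<phi> y = \<phi> x + L x * (y - x)" if "x \<le> \<theta>" "y \<le> \<theta>" for x y
  proof -
    have "\<phi> y - \<phi> x - L x * (y - x) \<le> 0" using bd[where x=x and y=y] that by (simp add: ee_def ind_def L_def)
    then show ?thesis using sg[of x y] by linarith
  qed
  have A': "\<phi> y = \<phi> x + L x * (y - x)" if "x > \<theta>" "y > \<theta>" for x y
  proof -
    have "\<phi> y - \<phi> x - L x * (y - x) \<le> 0" using bd[where x=x and y=y] that by (simp add: ee_def ind_def L_def)
    then show ?thesis using sg[of x y] by linarith
  qed
  have Cc: "L z = L x" if "z < x" "x \<le> \<theta>" for z x
  proof -
    have "L z * (x - z) = L x * (x - z)"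
      using A[of z x] A[of x z] that by (simp add: algebra_simps)
    then show ?thesis using that by simp
  qed
  have Cc': "L z = L x" if "x < z" "\<theta> < x" for z x
  proof -
    have "L z * (z - x) = L x * (z - x)"
      using A'[of z x] A'[of x z] that by (simp add: algebra_simps)
    then show ?thesis using that by simp
  qed
  have D: "L x = 0" if "x \<le> \<theta>" for x
  proof -
    have "(L \<longlongrightarrow> L x) at_bot"
      apply (rule tendsto_eventually)
      unfolding eventually_at_bot_linorder
      by (rule exI[of _ "x - 1"]) (use Cc that in auto)
    then show ?thesis using L0 tendsto_unique[OF trivial_limit_at_bot_linorder] by blast
  qed
  have D': "L x = 1" if "x > \<theta>" for x
  proof -
    have "(L \<longlongrightarrow> L x) at_top"
      apply (rule tendsto_eventually)
      unfolding eventually_at_top_linorder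
      by (rule exI[of _ "x + 1"]) (use Cc' that in auto)
    then show ?thesis using L1 tendsto_unique[OF trivial_limit_at_top_linorder] by blast
  qed
  have LL: "L x = ind (\<theta> < x)" for x using D D' by (auto simp: ind_def)
  have E: "\<phi> y = \<phi> \<theta>" if "y \<le> \<theta>" for y using A[of \<theta> y] D[of \<theta>] that by simp
  have F: "\<phi> y = \<phi> \<theta> + (y - \<theta>)" if "y > \<theta>" for y
  proof -
    define c where "c = \<phi> y - y"
    have cx: "\<phi> x = c + x" if "x > \<theta>" for x using A'[of y x] D'[of y] that \<open>y > \<theta>\<close> by (simp add: c_def)
    have up: "c + \<theta> \<le> \<phi> \<theta>" using sg[of y \<theta>] D'[of y] \<open>y > \<theta>\<close> by (simp add: c_def)
    have lo: "\<phi> \<theta> \<le> c + \<theta>"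
    proof (rule ccontr)
      assume "\<not> ?thesis"
      define x where "x = (\<phi> \<theta> - c + \<theta>) / 2"
      have "x > \<theta>" using \<open>\<not> _\<close> by (simp add: x_def)
      then have "\<phi> \<theta> \<le> c + x" using sg[of \<theta> x] D[of \<theta>] cx[of x] by simp
      then show False using \<open>\<not> _\<close> unfolding x_def by (simp add: field_simps)
    qed
    show ?thesis using up lo by (simp add: c_def)
  qed
  have phi: "\<phi> y = \<phi> \<theta> + ee \<theta> y" for y
  proof (cases "y \<le> \<theta>")
    case True then show ?thesis using E[of y] by (simp add: ee_def)
  next
    case False then show ?thesis using F[of y] by (simp add: ee_def)
  qed
  have key: "\<phi> y - \<phi> x - left_deriv \<phi> x * (y - x) = ee \<theta> y - ee \<theta> x - (y - x) * ind (\<theta> < x)" for x y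
    using phi[of x] phi[of y] LL[of x] by (simp add: L_def algebra_simps)
  show ?thesis
    unfolding fun_eq_iff S_E_def key by (simp add: S_elem_def ee_def)
qed

lemma B_nonneg:
  assumes "\<phi> \<in> class_C1" shows "0 \<le> \<phi> y - \<phi> x - left_deriv \<phi> x * (y - x)"
  using subgrad[of \<phi> x y] assms by (simp add: class_C1_def)

theorem mainTheorem4:
  fixes \<alpha> \<theta> :: real
  assumes "0 < \<alpha>" and "\<alpha> < 1"
  shows "S_elem \<alpha> \<theta> \<in> class_SE1 \<alpha> \<and>
    (\<forall>S1 \<in> class_SE1 \<alpha>. \<forall>S2 \<in> class_SE1 \<alpha>.
       (\<forall>x y. S_elem \<alpha> \<theta> x y = (S1 x y + S2 x y) / 2) \<longrightarrow>
       S1 = S_elem \<alpha> \<theta> \<and> S2 = S_elem \<alpha> \<theta>)"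
proof (intro conjI ballI impI)
  show "S_elem \<alpha> \<theta> \<in> class_SE1 \<alpha>" by (rule elem_in)
next
  fix S1 S2 assume S1: "S1 \<in> class_SE1 \<alpha>" and S2: "S2 \<in> class_SE1 \<alpha>"
    and H: "\<forall>x y. S_elem \<alpha> \<theta> x y = (S1 x y + S2 x y) / 2"
  obtain \<phi>1 where p1: "\<phi>1 \<in> class_C1" "S1 = S_E \<alpha> \<phi>1" using S1 by (auto simp: class_SE1_def)
  obtain \<phi>2 where p2: "\<phi>2 \<in> class_C1" "S2 = S_E \<alpha> \<phi>2" using S2 by (auto simp: class_SE1_def)
  define B\<theta> where "B\<theta> = (\<lambda>x y. ee \<theta> y - ee \<theta> x - (y - x) * ind (\<theta> < x))"
  define B1 where "B1 = (\<lambda>x y. \<phi>1 y - \<phi>1 x - left_deriv \<phi>1 x * (y - x))"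
  define B2 where "B2 = (\<lambda>x y. \<phi>2 y - \<phi>2 x - left_deriv \<phi>2 x * (y - x))"
  have sum: "2 * B\<theta> x y = B1 x y + B2 x y" for x y
  proof -
    define k where "k = \<bar>ind (y < x) - \<alpha>\<bar>"
    have kpos: "k > 0" using assms by (auto simp: k_def ind_def)
    have "k * B\<theta> x y = (k * B1 x y + k * B2 x y) / 2"
      using H[rule_format, of x y] unfolding p1 p2
      by (simp add: S_elem_def S_E_def k_def B\<theta>_def B1_def B2_def ee_def)
    then have "k * (2 * B\<theta> x y) = k * (B1 x y + B2 x y)" by (simp add: algebra_simps)
    then show ?thesis using kpos by simp
  qed
  have n1: "0 \<le> B1 x y" and n2: "0 \<le> B2 x y" for x y
    using B_nonneg[OF p1(1)] B_nonneg[OF p2(1)] by (auto simp: B1_def B2_def)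
  have "S_E \<alpha> \<phi>1 = S_elem \<alpha> \<theta>"
    apply (rule rigid[OF p1(1)])
    subgoal for x y using sum[of x y] n2[of x y] unfolding B1_def B\<theta>_def by linarith
    done
  moreover have "S_E \<alpha> \<phi>2 = S_elem \<alpha> \<theta>"
    apply (rule rigid[OF p2(1)])
    subgoal for x y using sum[of x y] n1[of x y] unfolding B2_def B\<theta>_def by linarith
    done
  ultimately show "S1 = S_elem \<alpha> \<theta>" "S2 = S_elem \<alpha> \<theta>" using p1 p2 by auto
qed

end
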